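(* Let $\gamma\ge1$, let $\mathcal{B}$ be a countably infinite subset of $\{z\in\mathbb{C}:\operatorname{Re}(z)\ge\gamma\}$, $\theta_b(z)=1/(z+b)$, and let $s>0$ with $\sum_{b\in\mathcal{B}}|b|^{-2s}<\infty$. Let $H\subset\mathbb{C}$ be a bounded, mildly regular open set with $H\supset G_\gamma=\{z:|z-1/(2\gamma)|<1/(2\gamma)\}$ and $\operatorname{Re}(z)>0$ on $H$. Let $L_s:C_{\mathbb{C}}(\bar H)\to C_{\mathbb{C}}(\bar H)$, $(L_sf)(z)=\sum_{b\in\mathcal{B}}|z+b|^{-2s}f(\theta_b(z))$, and let $v_s$ be a strictly positive continuous eigenfunction of $L_s$ on $\bar H$ (unique up to scalar multiples). For $R>2$ let $\mathcal{B}_R=\{b\in\mathcal{B}:|b|\le R\}$, $\mathcal{B}_R'=\{b\in\mathcal{B}:|b|>R\}$, and for $\alpha\ge0$ define $L_{s,R,\alpha}:C_{\mathbb{C}}(\bar H)\to C_{\mathbb{C}}(\bar H)$ by $$(L_{s,R,\alpha}f)(z)=\sum_{b\in\mathcal{B}_R}\frac{f(\theta_b(z))}{|z+b|^{2s}}+\alpha f(0).$$ Assume there exist $\delta_{s,R}>0$ and $\eta_{s,R}\ge0$ such that for all $z\in\bar H$ $$\eta_{s,R}v_s(0)\le\sum_{b\in\mathcal{B}_R'}\frac{1}{|z+b|^{2s}}v_s(\theta_b(z))\le\delta_{s,R}v_s(0).$$ Then, with $L_{s,R+}=L_{s,R,\delta_{s,R}}$ and $L_{s,R-}=L_{s,R,\eta_{s,R}}$,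 $$r(L_{s,R-})\le r(L_s)\le r(L_{s,R+}),$$ where $r$ denotes the spectral radius.
   Context: A bounded open set $H\subset\mathbb{R}^n$ is mildly regular if there exist $\eta>0$ and $M\ge1$ such that whenever $x,y\in H$ and $\|x-y\|<\eta$, there is a Lipschitz map $\psi:[0,1]\to H$ with $\psi(0)=x$, $\psi(1)=y$ and $\int_0^1\|\psi'(t)\|\,dt\le M\|x-y\|$. $C_{\mathbb{C}}(\bar H)$ is the space of continuous complex functions on $\bar H$ with sup norm; $r(L)=\lim_k\|L^k\|^{1/k}$. Note $0\in\bar H$. *)

theory Defs
  imports "HOL-Analysis.Analysis"
begin

definition mildly_regular :: "complex set \<Rightarrow> bool" where
  "mildly_regular H \<longleftrightarrow> (\<exists>\<eta>::real>0. \<exists>M::real\<ge>1. \<forall>x\<in>H. \<forall>y\<in>H. dist x y < \<eta> \<longrightarrow>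
     (\<exists>\<psi> :: real \<Rightarrow> complex. (\<exists>C::real. lipschitz_on C {0..1} \<psi>) \<and> \<psi> ` {0..1} \<subseteq> H \<and>
        \<psi> 0 = x \<and> \<psi> 1 = y \<and>
        (\<lambda>t. norm (vector_derivative \<psi> (at t))) integrable_on {0..1} \<and>
        integral {0..1} (\<lambda>t. norm (vector_derivative \<psi> (at t))) \<le> M * dist x y))"

definition supnorm :: "complex set \<Rightarrow> (complex \<Rightarrow> complex) \<Rightarrow> real" where
  "supnorm K f = (SUP z\<in>K. cmod (f z))"

definition opnorm :: "complex set \<Rightarrow> ((complex \<Rightarrow> complex) \<Rightarrow> (complex \<Rightarrow> complex)) \<Rightarrow> real" where
  "opnorm K L = (SUP f\<in>{f. continuous_on K f \<and> supnorm K f \<le> 1}. supnorm K (L f))"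

definition spectral_radius :: "complex set \<Rightarrow> ((complex \<Rightarrow> complex) \<Rightarrow> (complex \<Rightarrow> complex)) \<Rightarrow> real" where
  "spectral_radius K L = lim (\<lambda>k. opnorm K (L ^^ k) powr (1 / real k))"

definition Lop :: "complex set \<Rightarrow> real \<Rightarrow> (complex \<Rightarrow> complex) \<Rightarrow> complex \<Rightarrow> complex" where
  "Lop B s f z = (\<Sum>\<^sub>\<infinity>b\<in>B. complex_of_real (cmod (z + b) powr (-2 * s)) * f (1 / (z + b)))"

definition LopR :: "complex set \<Rightarrow> real \<Rightarrow> real \<Rightarrow> real \<Rightarrow> (complex \<Rightarrow> complex) \<Rightarrow> complex \<Rightarrow> complex" where
  "LopR B s R \<alpha> f z = (\<Sum>b\<in>{b\<in>B. cmod b \<le> R}. complex_of_real (cmod (z + b) powr (-2 * s)) * f (1 / (z + b)))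
      + complex_of_real \<alpha> * f 0"

end

theory Submission imports Defs begin

lemma pow_powr_inv:
  fixes x :: real assumes "x \<ge> 0" "n > 0"
  shows "(x powr (1 / real n)) ^ n = x"
proof (cases "x = 0")
  case True then show ?thesis using assms by simp
next
  case False
  then have "(x powr (1 / real n)) ^ n = x powr (1 / real n * real n)"
    using assms by (simp add: powr_realpow[symmetric] powr_powr)
  also have "\<dots> = x" using assms False by simp
  finally show ?thesis .
qed

lemma submult_power:
  fixes a :: "nat \<Rightarrow> real"
  assumes nn: "\<And>n. a n \<ge> 0" and sub: "\<And>m n. a (m+n) \<le> a m * a n"
  shows "a (q*m + r) \<le> a m ^ q * a r"
proof (induction q)
  case 0 then show ?case by simp
next
  case (Suc q)
  have "a (Suc q * m + r) = a (m + (q*m + r))" by (simp add: algebra_simps)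
  also have "\<dots> \<le> a m * a (q*m+r)" by (rule sub)
  also have "\<dots> \<le> a m * (a m ^ q * a r)" using Suc nn by (simp add: mult_left_mono)
  finally show ?case by (simp add: algebra_simps)
qed

lemma fekete_mult:
  fixes a :: "nat \<Rightarrow> real"
  assumes nn: "\<And>n. a n \<ge> 0" and sub: "\<And>m n. a (m+n) \<le> a m * a n"
  shows "convergent (\<lambda>n. a n powr (1 / real n))"
proof -
  define x where "x n = a n powr (1 / real n)" for n
  define L where "L = Inf (x ` {1..})"
  have xnn: "x n \<ge> 0" for n unfolding x_def by simp
  have bdd: "bdd_below (x ` {1..})" using xnn by (auto intro: bdd_belowI[of _ 0])
  have Lle: "L \<le> x n" if "n \<ge> 1" for n unfolding L_def using bdd that by (auto intro: cInf_lower)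
  have Lnn: "L \<ge> 0" unfolding L_def using xnn by (auto intro: cInf_greatest)
  have "x \<longlonglongrightarrow> L"
  proof (rule order_tendstoI)
    fix y assume "y < L"
    then show "\<forall>\<^sub>F n in sequentially. y < x n"
      using Lle by (auto intro!: eventually_sequentiallyI[of 1] less_le_trans[OF _ Lle])
  next
    fix y assume yL: "L < y"
    define t where "t = (L + y) / 2"
    have tpos: "t > 0" and tL: "L < t" and ty: "t < y" using yL Lnn by (auto simp: t_def)
    obtain m where m1: "m \<ge> 1" and xm: "x m < t"
    proof -
      have "x ` {1..} \<noteq> {}" by auto
      from cInf_lessD[OF this, of t] tL obtain w where "w \<in> x ` {1..}" "w < t"
        unfolding L_def by auto
      then show ?thesis using that by auto
    qed
    have am: "a m \<le> t ^ m"
    proof -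
      have "a m = x m ^ m" unfolding x_def using pow_powr_inv[OF nn, of m] m1 by simp
      also have "\<dots> \<le> t ^ m" using xm xnn by (intro power_mono) auto
      finally show ?thesis .
    qed
    define C where "C = (\<Sum>r<m. a r) + 1"
    have aC: "a r \<le> C" if "r < m" for r
    proof -
      have "a r \<le> (\<Sum>r<m. a r)" using that nn by (intro member_le_sum) auto
      then show ?thesis unfolding C_def by simp
    qed
    have C1: "C \<ge> 1" unfolding C_def using nn by (simp add: sum_nonneg)
    define D where "D = C * max 1 ((1/t)^m)"
    have M1: "max 1 ((1/t)^m) \<ge> 1" by simp
    have D1: "D \<ge> 1" unfolding D_def using mult_mono[OF C1 M1] C1 by simp
    have aD: "a n \<le> t ^ n * D" for n
    proof -
      define q where "q = n div m"
      define r where "r = n mod m"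
      have n_eq: "n = q*m + r" unfolding q_def r_def by simp
      have rm: "r < m" unfolding r_def using m1 by simp
      have "a n \<le> a m ^ q * a r" unfolding n_eq by (rule submult_power[OF nn sub])
      also have "\<dots> \<le> (t^m)^q * C"
        using am aC[OF rm] nn tpos by (intro mult_mono power_mono) (auto simp: zero_le_power)
      also have "(t^m)^q \<le> t^n * max 1 ((1/t)^m)"
      proof (cases "t \<ge> 1")
        case True
        have "(t^m)^q = t^(q*m)" by (simp add: power_mult mult.commute)
        also have "\<dots> \<le> t^n" using True n_eq by (intro power_increasing) auto
        also have "\<dots> \<le> t^n * max 1 ((1/t)^m)" using tpos by (simp add: mult_le_cancel_left1)
        finally show ?thesis .
      next
        case False
        have "t^n = t^(q*m) * t^r" unfolding n_eq by (simp add: power_add)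
        moreover have "t^r \<ge> t^m" using False tpos rm by (intro power_decreasing) auto
        ultimately have "t^(q*m) * t^m \<le> t^n" using tpos
          by (simp add: mult_left_mono zero_le_power)
        then have "t^(q*m) \<le> t^n * (1/t)^m" using tpos
          by (simp add: field_simps power_divide)
        moreover have "t^n * (1/t)^m \<le> t^n * max 1 ((1/t)^m)" using tpos by (simp add: mult_left_mono)
        ultimately show ?thesis by (simp add: power_mult mult.commute)
      qed
      then have "(t^m)^q * C \<le> t^n * max 1 ((1/t)^m) * C" using C1 by (simp add: mult_right_mono)
      finally show ?thesis unfolding D_def by (simp add: algebra_simps)
    qed
    have xD: "x n \<le> t * D powr (1 / real n)" if "n \<ge> 1" for n
    proof -
      have "x n \<le> (t ^ n * D) powr (1 / real n)" unfolding x_def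
        using aD nn by (intro powr_mono2) auto
      also have "\<dots> = (t^n) powr (1/real n) * D powr (1 / real n)"
        using tpos D1 by (simp add: powr_mult)
      also have "(t^n) powr (1/real n) = t" using tpos that
        by (simp add: powr_realpow[symmetric] powr_powr)
      finally show ?thesis .
    qed
    have "(\<lambda>n. t * D powr (1 / real n)) \<longlonglongrightarrow> t * D powr 0"
      using D1 by (intro tendsto_intros LIMSEQ_inverse_real_of_nat[simplified inverse_eq_divide]) auto
    then have "(\<lambda>n. t * D powr (1 / real n)) \<longlonglongrightarrow> t" using D1 by simp
    then have "\<forall>\<^sub>F n in sequentially. t * D powr (1 / real n) < y" using ty
      by (rule order_tendstoD)
    then show "\<forall>\<^sub>F n in sequentially. x n < y"
      using eventually_ge_at_top[of 1]
      by eventually_elim (rule le_less_trans[OF xD])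
  qed
  then show ?thesis unfolding x_def convergent_def by blast
qed

lemma supnorm_ge:
  assumes "compact K" "continuous_on K f" "z \<in> K"
  shows "cmod (f z) \<le> supnorm K f"
proof -
  have "compact ((\<lambda>z. cmod (f z)) ` K)"
    using assms by (intro compact_continuous_image continuous_intros) auto
  then have "bdd_above ((\<lambda>z. cmod (f z)) ` K)" by (intro bounded_imp_bdd_above compact_imp_bounded)
  then show ?thesis unfolding supnorm_def using assms by (intro cSUP_upper) auto
qed

lemma supnorm_le:
  assumes "K \<noteq> {}" "\<And>z. z \<in> K \<Longrightarrow> cmod (f z) \<le> C"
  shows "supnorm K f \<le> C"
  unfolding supnorm_def using assms by (intro cSUP_least) auto

lemma opnorm_le:
  assumes "K \<noteq> {}"
    and "\<And>f z. continuous_on K f \<Longrightarrow> supnorm K f \<le> 1 \<Longrightarrow> z \<in> K \<Longrightarrow> cmod (M f z) \<le> C"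
  shows "opnorm K M \<le> C"
proof -
  have "supnorm K (\<lambda>_. 0) \<le> 1" using assms(1) by (intro supnorm_le) auto
  then have ne: "{f. continuous_on K f \<and> supnorm K f \<le> 1} \<noteq> {}" by (auto intro!: exI[of _ "\<lambda>_. 0"])
  show ?thesis unfolding opnorm_def
    by (rule cSUP_least[OF ne]) (use assms in \<open>auto intro!: supnorm_le\<close>)
qed

lemma opnorm_ge:
  assumes "K \<noteq> {}"
    and bnd: "\<And>f z. continuous_on K f \<Longrightarrow> supnorm K f \<le> 1 \<Longrightarrow> z \<in> K \<Longrightarrow> cmod (M f z) \<le> C"
    and f: "continuous_on K f" "supnorm K f \<le> 1" and z: "z \<in> K"
  shows "cmod (M f z) \<le> opnorm K M"
proof -
  have "bdd_above ((\<lambda>z. cmod (M f z)) ` K)" by (rule bdd_aboveI2[where M=C]) (rule bnd[OF f])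
  then have 1: "cmod (M f z) \<le> supnorm K (M f)" unfolding supnorm_def using z by (intro cSUP_upper) auto
  have "bdd_above ((\<lambda>f. supnorm K (M f)) ` {f. continuous_on K f \<and> supnorm K f \<le> 1})"
    using assms(1) bnd by (auto intro!: bdd_aboveI2 supnorm_le)
  then have "supnorm K (M f) \<le> opnorm K M" unfolding opnorm_def using f by (intro cSUP_upper) auto
  with 1 show ?thesis by simp
qed

definition good_op :: "complex set \<Rightarrow> ((complex \<Rightarrow> complex) \<Rightarrow> (complex \<Rightarrow> complex)) \<Rightarrow> real \<Rightarrow> bool" where
  "good_op K L N \<longleftrightarrow> (\<forall>c g. L (\<lambda>z. c * g z) = (\<lambda>z. c * L g z))
     \<and> (\<forall>g h. (\<forall>z\<in>K. g z = h z) \<longrightarrow> (\<forall>z\<in>K. L g z = L h z))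
     \<and> N \<ge> 0 \<and> (\<forall>g G. (\<forall>z\<in>K. cmod (g z) \<le> G) \<longrightarrow> (\<forall>z\<in>K. cmod (L g z) \<le> N * G))
     \<and> (\<forall>g. continuous_on K g \<longrightarrow> continuous_on K (L g))"

lemma good_hom: "good_op K L N \<Longrightarrow> L (\<lambda>z. c * g z) = (\<lambda>z. c * L g z)"
  unfolding good_op_def by blast
lemma good_loc: "good_op K L N \<Longrightarrow> (\<And>z. z \<in> K \<Longrightarrow> g z = h z) \<Longrightarrow> z \<in> K \<Longrightarrow> L g z = L h z"
  unfolding good_op_def by blast
lemma good_N: "good_op K L N \<Longrightarrow> N \<ge> 0"
  unfolding good_op_def by blast
lemma good_bnd: "good_op K L N \<Longrightarrow> (\<And>z. z \<in> K \<Longrightarrow> cmod (g z) \<le> G) \<Longrightarrow> z \<in> K \<Longrightarrow> cmod (L g z) \<le> N * G"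
  unfolding good_op_def by blast
lemma good_cont: "good_op K L N \<Longrightarrow> continuous_on K g \<Longrightarrow> continuous_on K (L g)"
  unfolding good_op_def by blast
lemma good_opI:
  assumes "\<And>c g. L (\<lambda>z. c * g z) = (\<lambda>z. c * L g z)"
    "\<And>g h z. (\<And>z. z \<in> K \<Longrightarrow> g z = h z) \<Longrightarrow> z \<in> K \<Longrightarrow> L g z = L h z"
    "N \<ge> 0" "\<And>g G z. (\<And>z. z \<in> K \<Longrightarrow> cmod (g z) \<le> G) \<Longrightarrow> z \<in> K \<Longrightarrow> cmod (L g z) \<le> N * G"
    "\<And>g. continuous_on K g \<Longrightarrow> continuous_on K (L g)"
  shows "good_op K L N"
  unfolding good_op_def
  apply (intro conjI allI impI ballI)
      apply (rule assms(1))
     apply (rule assms(2); simp)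
    apply (rule assms(3))
   apply (rule assms(4); simp)
  apply (rule assms(5); assumption)
  done

lemma good_pow:
  assumes "good_op K L N" shows "good_op K (L ^^ k) (N ^ k)"
proof (induction k)
  case 0 show ?case
    by (rule good_opI) auto
next
  case (Suc k)
  note g = assms and gk = Suc
  show ?case
  proof (rule good_opI)
    fix c :: complex and g :: "complex \<Rightarrow> complex" show "(L ^^ Suc k) (\<lambda>z. c * g z) = (\<lambda>z. c * (L ^^ Suc k) g z)"
      by (simp only: funpow.simps comp_def good_hom[OF gk] good_hom[OF assms])
  next
    fix g h :: "complex \<Rightarrow> complex" and z assume "\<And>z. z \<in> K \<Longrightarrow> g z = h z" "z \<in> K"
    then have "(L ^^ k) g w = (L ^^ k) h w" if "w \<in> K" for w
      using good_loc[OF gk, of g h w] that by blast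
    then have "L ((L ^^ k) g) z = L ((L ^^ k) h) z"
      using good_loc[OF assms, of "(L^^k) g" "(L^^k) h" z] \<open>z \<in> K\<close> by blast
    then show "(L ^^ Suc k) g z = (L ^^ Suc k) h z" by simp
  next
    show "0 \<le> N ^ Suc k" using good_N[OF assms] by simp
  next
    fix g :: "complex \<Rightarrow> complex" and G z assume a: "\<And>z. z \<in> K \<Longrightarrow> cmod (g z) \<le> G" "z \<in> K"
    have "cmod (L ((L^^k) g) z) \<le> N * (N ^ k * G)"
      by (rule good_bnd[OF assms _ a(2)]) (rule good_bnd[OF gk a(1)])
    then show "cmod ((L ^^ Suc k) g z) \<le> N ^ Suc k * G" by (simp add: algebra_simps)
  next
    fix g :: "complex \<Rightarrow> complex" assume "continuous_on K g" then show "continuous_on K ((L ^^ Suc k) g)"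
      using good_cont[OF assms] good_cont[OF gk] by simp
  qed
qed

lemma good_bound1:
  assumes "good_op K L N" "compact K" "continuous_on K f" "supnorm K f \<le> 1" "z \<in> K"
  shows "cmod (L f z) \<le> N"
proof -
  have "cmod (f w) \<le> 1" if "w \<in> K" for w using supnorm_ge[OF assms(2,3) that] assms(4) by linarith
  then show ?thesis using good_bnd[OF assms(1) _ assms(5), of f 1] by simp
qed

lemma opnorm_ge_good:
  assumes g: "good_op K L N" and K: "compact K" "K \<noteq> {}"
    and f: "continuous_on K f" "supnorm K f \<le> 1" and z: "z \<in> K"
  shows "cmod (L f z) \<le> opnorm K L"
proof (rule opnorm_ge[where M=L and C=N, OF K(2) _ f z])
  fix f z assume "continuous_on K f" "supnorm K f \<le> 1" "z \<in> K"
  then show "cmod (L f z) \<le> N" by (rule good_bound1[OF g K(1)])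
qed

lemma opnorm_bound_point:
  assumes g: "good_op K L N" and K: "compact K" "K \<noteq> {}" and c: "continuous_on K g" and z: "z \<in> K"
  shows "cmod (L g z) \<le> opnorm K L * supnorm K g"
proof -
  define S where "S = supnorm K g"
  have gS: "cmod (g w) \<le> S" if "w \<in> K" for w unfolding S_def using supnorm_ge[OF K(1) c that] .
  have S0: "S \<ge> 0" using gS[OF z] by (meson norm_ge_zero order_trans)
  note hom = good_hom[OF g]
  show ?thesis
  proof (cases "S = 0")
    case True
    have "L g z = L (\<lambda>w. 0 * g w) z"
      by (rule good_loc[OF g _ z]) (use gS True in auto)
    also have "L (\<lambda>w. 0 * g w) = (\<lambda>w. 0 * L g w)" by (rule hom)
    finally have "L g z = 0" by simp
    then show ?thesis using True by (simp add: S_def)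
  next
    case False
    then have Sp: "S > 0" using S0 by simp
    define h where "h w = complex_of_real (1/S) * g w" for w
    have hc: "continuous_on K h" unfolding h_def using c by (intro continuous_intros)
    have hn: "supnorm K h \<le> 1"
    proof (rule supnorm_le[OF K(2)])
      fix w assume w: "w \<in> K"
      have "cmod (h w) = cmod (g w) / S" using Sp by (simp add: h_def norm_divide)
      also have "\<dots> \<le> 1" using gS[OF w] Sp by simp
      finally show "cmod (h w) \<le> 1" .
    qed
    have "cmod (L h z) \<le> opnorm K L"
      using opnorm_ge_good[OF g K hc hn z] .
    moreover have "L h z = complex_of_real (1/S) * L g z" unfolding h_def by (subst hom) (rule refl)
    ultimately have "cmod (L g z) / S \<le> opnorm K L" using Sp by (simp add: norm_divide)
    then show ?thesis using Sp by (simp add: S_def[symmetric] divide_le_eq mult.commute)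
  qed
qed

lemma opnorm_nonneg:
  assumes g: "good_op K L N" and K: "compact K" "K \<noteq> {}"
  shows "opnorm K L \<ge> 0"
proof -
  obtain z where z: "z \<in> K" using K by auto
  have "supnorm K (\<lambda>_. 0) \<le> 1" using K by (intro supnorm_le) auto
  then have "cmod (L (\<lambda>_. 0) z) \<le> opnorm K L"
    by (intro opnorm_ge_good[OF g K _ _ z]) auto
  then show ?thesis by (meson norm_ge_zero order_trans)
qed

lemma opnorm_submult:
  assumes g: "good_op K L N" and K: "compact K" "K \<noteq> {}"
  shows "opnorm K (L ^^ (m + n)) \<le> opnorm K (L ^^ m) * opnorm K (L ^^ n)"
proof (rule opnorm_le[OF K(2)])
  fix f z assume f: "continuous_on K f" "supnorm K f \<le> 1" and z: "z \<in> K"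
  have gm: "good_op K (L^^m) (N^m)" and gn: "good_op K (L^^n) (N^n)" using good_pow[OF g] by auto
  have cn: "continuous_on K ((L^^n) f)" using good_cont[OF gn f(1)] .
  have "(L ^^ (m + n)) f z = (L^^m) ((L^^n) f) z" by (simp add: funpow_add)
  then have "cmod ((L ^^ (m + n)) f z) \<le> opnorm K (L ^^ m) * supnorm K ((L^^n) f)"
    using opnorm_bound_point[OF gm K cn z] by simp
  also have "supnorm K ((L^^n) f) \<le> opnorm K (L^^n)"
    by (rule supnorm_le[OF K(2)]) (rule opnorm_ge_good[OF gn K f])
  then have "opnorm K (L ^^ m) * supnorm K ((L^^n) f) \<le> opnorm K (L ^^ m) * opnorm K (L^^n)"
    using opnorm_nonneg[OF gm K] by (rule mult_left_mono)
  finally show "cmod ((L ^^ (m + n)) f z) \<le> opnorm K (L ^^ m) * opnorm K (L ^^ n)" .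
qed

lemma sr_convergent:
  assumes g: "good_op K L N" and K: "compact K" "K \<noteq> {}"
  shows "convergent (\<lambda>k. opnorm K (L ^^ k) powr (1 / real k))"
  using fekete_mult[of "\<lambda>k. opnorm K (L ^^ k)"] opnorm_nonneg[OF good_pow[OF g] K]
    opnorm_submult[OF g K] by blast

lemma inv_in_cball:
  fixes w :: complex and \<gamma> :: real
  assumes "\<gamma> > 0" "Re w \<ge> \<gamma>"
  shows "1 / w \<in> cball (complex_of_real (1 / (2 * \<gamma>))) (1 / (2 * \<gamma>))"
proof -
  define c where "c = 1 / (2 * \<gamma>)"
  define x where "x = Re w"
  define y where "y = Im w"
  define n where "n = x^2 + y^2"
  have xpos: "x > 0" using assms unfolding x_def by simp
  have npos: "n > 0" unfolding n_def using xpos by (simp add: add_pos_nonneg)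
  have cpos: "c > 0" unfolding c_def using assms by simp
  have c2x: "2 * c * x \<ge> 1" unfolding c_def x_def using assms by (simp add: field_simps)
  have re: "Re (1 / w) = x / n" and im: "Im (1 / w) = - y / n"
    unfolding x_def y_def n_def by (simp_all add: Re_divide Im_divide power2_eq_square)
  have e1: "(x / n)^2 + (y / n)^2 = 1 / n"
  proof -
    have "(x / n)^2 + (y / n)^2 = n / n^2" unfolding n_def by (simp add: power_divide add_divide_distrib)
    also have "\<dots> = 1 / n" using npos by (simp add: power2_eq_square)
    finally show ?thesis .
  qed
  have "(c - x / n)^2 + (y / n)^2 = c^2 - 2*c*(x/n) + ((x / n)^2 + (y / n)^2)"
    by (simp add: power2_diff)
  also have "\<dots> = c^2 - (2*c*x - 1) / n" unfolding e1 by (simp add: diff_divide_distrib)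
  also have "\<dots> \<le> c^2" using c2x npos by simp
  finally have sq: "(c - x / n)^2 + (- y / n)^2 \<le> c^2" by simp
  have "dist (complex_of_real c) (1 / w) = sqrt ((c - x / n)^2 + (- y / n)^2)"
    unfolding dist_norm cmod_def using re im by simp
  also have "\<dots> \<le> sqrt (c^2)" using sq by (rule real_sqrt_le_mono)
  also have "\<dots> = c" using cpos by simp
  finally show ?thesis unfolding c_def by simp
qed


lemma finite_BR:
  fixes B :: "complex set" and s R :: real
  assumes sum: "(\<lambda>b. cmod b powr (-2 * s)) summable_on B" and R: "R > 0" and s: "s > 0"
    and nz: "0 \<notin> B"
  shows "finite {b\<in>B. cmod b \<le> R}"
proof (rule ccontr)
  define BR where "BR = {b\<in>B. cmod b \<le> R}"
  define S where "S = (\<Sum>\<^sub>\<infinity>b\<in>B. cmod b powr (-2 * s))"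
  define e where "e = R powr (-2 * s)"
  have epos: "e > 0" unfolding e_def using R by simp
  assume "infinite {b\<in>B. cmod b \<le> R}"
  then have inf: "infinite BR" unfolding BR_def .
  obtain n :: nat where n: "real n > S / e" using reals_Archimedean2 by blast
  obtain F where F: "F \<subseteq> BR" "finite F" "card F = n" using infinite_arbitrarily_large[OF inf] by blast
  have "real n * e = (\<Sum>b\<in>F. e)" using F by simp
  also have "\<dots> \<le> (\<Sum>b\<in>F. cmod b powr (-2 * s))"
  proof (rule sum_mono)
    fix b assume "b \<in> F"
    then have b: "b \<in> B" "cmod b \<le> R" using F unfolding BR_def by auto
    then have "b \<noteq> 0" using nz by auto
    then show "e \<le> cmod b powr (-2 * s)" unfolding e_def using b s by (intro powr_mono2') auto
  qed
  also have "\<dots> = (\<Sum>\<^sub>\<infinity>b\<in>F. cmod b powr (-2 * s))" using F by simp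
  also have "\<dots> \<le> S" unfolding S_def
    using F sum by (intro infsum_mono2) (auto simp: BR_def)
  finally have "real n \<le> S / e" using epos by (simp add: field_simps)
  with n show False by simp
qed


lemma pow_powr_root:
  fixes x :: real assumes "x \<ge> 0" "k > 0"
  shows "(x ^ k) powr (1 / real k) = x"
proof (cases "x = 0")
  case True then show ?thesis using assms by simp
next
  case False
  then have "(x ^ k) powr (1 / real k) = (x powr real k) powr (1 / real k)"
    using assms by (simp add: powr_realpow)
  also have "\<dots> = x" using assms False by (simp add: powr_powr)
  finally show ?thesis .
qed

lemma root_lower:
  fixes a :: "nat \<Rightarrow> real" assumes "lam \<ge> 0" "k \<ge> 1" "lam ^ k \<le> a k"
  shows "lam \<le> a k powr (1 / real k)"
proof -
  have "lam = (lam ^ k) powr (1 / real k)" using pow_powr_root assms by simp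
  also have "\<dots> \<le> a k powr (1 / real k)" using assms by (intro powr_mono2) auto
  finally show ?thesis .
qed

lemma root_upper:
  fixes a :: "nat \<Rightarrow> real" assumes "lam \<ge> 0" "D > 0" "k \<ge> 1" "0 \<le> a k" "a k \<le> lam ^ k * D"
  shows "a k powr (1 / real k) \<le> lam * D powr (1 / real k)"
proof -
  have "a k powr (1 / real k) \<le> (lam ^ k * D) powr (1 / real k)" using assms by (intro powr_mono2) auto
  also have "\<dots> = (lam ^ k) powr (1 / real k) * D powr (1 / real k)" using assms by (simp add: powr_mult)
  also have "(lam ^ k) powr (1 / real k) = lam" using pow_powr_root assms by simp
  finally show ?thesis .
qed

lemma tend_upper:
  fixes D lam :: real assumes "D > 0"
  shows "(\<lambda>k. lam * D powr (1 / real k)) \<longlonglongrightarrow> lam"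
proof -
  have "(\<lambda>k. lam * D powr (1 / real k)) \<longlonglongrightarrow> lam * D powr 0"
    using assms by (intro tendsto_intros LIMSEQ_inverse_real_of_nat[simplified inverse_eq_divide]) auto
  then show ?thesis using assms by simp
qed

theorem theorem5p11:
  fixes \<gamma> s R \<delta> \<eta> :: real and B H :: "complex set" and v :: "complex \<Rightarrow> real"
  assumes "\<gamma> \<ge> 1"
    and "countable B" and "infinite B" and "B \<subseteq> {z. Re z \<ge> \<gamma>}"
    and "s > 0" and "(\<lambda>b. cmod b powr (-2 * s)) summable_on B"
    and "bounded H" and "open H" and "mildly_regular H"
    and "ball (complex_of_real (1 / (2 * \<gamma>))) (1 / (2 * \<gamma>)) \<subseteq> H"
    and "\<forall>z\<in>H. Re z > 0"
    and "continuous_on (closure H) v" and "\<forall>z\<in>closure H. v z > 0"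
    and "\<exists>\<mu>::complex. \<forall>z\<in>closure H. Lop B s (\<lambda>w. complex_of_real (v w)) z = \<mu> * complex_of_real (v z)"
    and "R > 2"
    and "\<delta> > 0" and "\<eta> \<ge> 0"
    and "\<forall>z\<in>closure H.
           \<eta> * v 0 \<le> (\<Sum>\<^sub>\<infinity>b\<in>{b\<in>B. cmod b > R}. cmod (z + b) powr (-2 * s) * v (1 / (z + b)))
         \<and> (\<Sum>\<^sub>\<infinity>b\<in>{b\<in>B. cmod b > R}. cmod (z + b) powr (-2 * s) * v (1 / (z + b))) \<le> \<delta> * v 0"
  shows "spectral_radius (closure H) (LopR B s R \<eta>) \<le> spectral_radius (closure H) (Lop B s)
       \<and> spectral_radius (closure H) (Lop B s) \<le> spectral_radius (closure H) (LopR B s R \<delta>)"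
proof -
  note g1 = assms(1) and Bsub = assms(4) and s0 = assms(5) and sumB = assms(6)
    and Hb = assms(7) and ballH = assms(10) and Hre = assms(11) and vc = assms(12) and vpos = assms(13)
    and eig = assms(14) and R2 = assms(15) and \<delta>0 = assms(16) and \<eta>0 = assms(17) and tail = assms(18)
  define K where "K = closure H"
  define c where "c = 1 / (2 * \<gamma>)"
  have cpos: "c > 0" unfolding c_def using g1 by simp
  have cbK: "cball (complex_of_real c) c \<subseteq> K"
    unfolding K_def using closure_mono[OF ballH] cpos by (simp add: c_def)
  have K0: "0 \<in> K" using cbK cpos by (auto simp: dist_norm)
  have Kne: "K \<noteq> {}" using K0 by auto
  have Kc: "compact K" unfolding K_def using Hb by (simp add: compact_eq_bounded_closed bounded_closure)
  have Kre: "Re z \<ge> 0" if "z \<in> K" for z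
  proof -
    have "closure H \<subseteq> {z. Re z \<ge> 0}"
      using Hre by (intro closure_minimal) (auto intro: less_imp_le closed_halfspace_Re_ge)
    then show ?thesis using that unfolding K_def by auto
  qed
  have Bre: "Re b \<ge> \<gamma>" if "b \<in> B" for b using Bsub that by auto
  have zb1: "1 \<le> cmod (z + b)" if "z \<in> K" "b \<in> B" for z b
  proof -
    have "1 \<le> Re (z + b)" using Kre[OF that(1)] Bre[OF that(2)] g1 by simp
    also have "\<dots> \<le> cmod (z + b)" by (rule complex_Re_le_cmod)
    finally show ?thesis .
  qed
  have zbnz: "z + b \<noteq> 0" if "z \<in> K" "b \<in> B" for z b using zb1[OF that] by auto
  have theta: "1 / (z + b) \<in> K" if "z \<in> K" "b \<in> B" for z b
  proof -
    have "Re (z + b) \<ge> \<gamma>" using Kre[OF that(1)] Bre[OF that(2)] by simp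
    then have "1 / (z + b) \<in> cball (complex_of_real c) c"
      unfolding c_def using g1 by (intro inv_in_cball) auto
    then show ?thesis using cbK by auto
  qed
  obtain M where M1: "M \<ge> 1" and Mb: "\<And>z. z \<in> K \<Longrightarrow> cmod z \<le> M"
  proof -
    obtain M0 where "\<forall>z\<in>K. cmod z \<le> M0" using compact_imp_bounded[OF Kc] by (auto simp: bounded_iff)
    then show ?thesis by (intro that[of "max 1 M0"]) (auto simp: le_max_iff_disj)
  qed
  define W where "W z b = cmod (z + b) powr (-2 * s)" for z b
  have Wnn: "W z b \<ge> 0" for z b unfolding W_def by simp
  have W1: "W z b \<le> 1" if "z \<in> K" "b \<in> B" for z b
  proof -
    have "W z b \<le> 1 powr (-2 * s)" unfolding W_def using zb1[OF that] s0 by (intro powr_mono2') auto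
    then show ?thesis by simp
  qed
  define CW where "CW = (2 * M) powr (2 * s)"
  have CW0: "CW \<ge> 0" unfolding CW_def by simp
  have Wb: "W z b \<le> CW * cmod b powr (-2 * s)" if "z \<in> K" "b \<in> B" for z b
  proof -
    have bnz: "b \<noteq> 0" using Bre[OF that(2)] g1 by auto
    have low: "cmod b / (2 * M) \<le> cmod (z + b)"
    proof (cases "cmod b \<ge> 2 * M")
      case True
      have "cmod b - M \<le> cmod (z + b)" using Mb[OF that(1)] norm_triangle_ineq2[of b "-z"]
        by (simp add: add.commute)
      moreover have "cmod b / (2 * M) \<le> cmod b / 2" using M1 by (intro divide_left_mono) auto
      moreover have "cmod b / 2 \<le> cmod b - M" using True by simp
      ultimately show ?thesis by linarith
    next
      case False
      then have "cmod b / (2 * M) \<le> 1" using M1 by simp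
      then show ?thesis using zb1[OF that] by linarith
    qed
    have "W z b \<le> (cmod b / (2 * M)) powr (-2 * s)" unfolding W_def
      using low s0 bnz M1 by (intro powr_mono2') auto
    also have "\<dots> = CW * cmod b powr (-2 * s)" unfolding CW_def using M1 bnz
      by (simp add: powr_divide powr_minus divide_simps)
    finally show ?thesis .
  qed
  have sumW: "(\<lambda>b. W z b * G b) summable_on B" if "z \<in> K" "\<And>b. b \<in> B \<Longrightarrow> 0 \<le> G b \<and> G b \<le> C" for z G C
  proof (rule summable_on_comparison_test)
    show "(\<lambda>b. (C * CW) * cmod b powr (-2 * s)) summable_on B" using sumB by (rule summable_on_cmult_right)
  next
    fix b assume b: "b \<in> B"
    have "W z b * G b \<le> (CW * cmod b powr (-2 * s)) * C"
      using Wb[OF that(1) b] that(2)[OF b] Wnn CW0 by (intro mult_mono) auto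
    then show "W z b * G b \<le> (C * CW) * cmod b powr (-2 * s)" by (simp add: algebra_simps)
  next
    fix b assume b: "b \<in> B" then show "0 \<le> W z b * G b" using that(2)[OF b] Wnn by simp
  qed
  obtain zmin where zmin: "zmin \<in> K" "\<And>z. z \<in> K \<Longrightarrow> v zmin \<le> v z"
    using continuous_attains_inf[OF Kc Kne vc[folded K_def]] by blast
  obtain zmax where zmax: "zmax \<in> K" "\<And>z. z \<in> K \<Longrightarrow> v z \<le> v zmax"
    using continuous_attains_sup[OF Kc Kne vc[folded K_def]] by blast
  define vmin where "vmin = v zmin"
  define vmax where "vmax = v zmax"
  have vpos': "v z > 0" if "z \<in> K" for z using vpos that unfolding K_def by auto
  have vmin0: "vmin > 0" unfolding vmin_def using vpos' zmin by auto
  have vbnd: "vmin \<le> v z" "v z \<le> vmax" if "z \<in> K" for z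
    using zmin zmax that unfolding vmin_def vmax_def by auto
  have vmax0: "vmax > 0" using vmin0 vbnd[OF K0] by linarith
  define T where "T z = (\<Sum>\<^sub>\<infinity>b\<in>B. W z b * v (1 / (z + b)))" for z
  have sumT: "(\<lambda>b. W z b * v (1 / (z + b))) summable_on B" if "z \<in> K" for z
  proof (rule sumW[OF that, where C=vmax])
    fix b assume b: "b \<in> B"
    show "0 \<le> v (1 / (z + b)) \<and> v (1 / (z + b)) \<le> vmax"
      using vbnd(2)[OF theta[OF that b]] vpos'[OF theta[OF that b]] by simp
  qed
  have LopT: "Lop B s (\<lambda>w. complex_of_real (v w)) z = complex_of_real (T z)" if "z \<in> K" for z
  proof -
    have "((\<lambda>b. complex_of_real (W z b * v (1 / (z + b)))) has_sum complex_of_real (T z)) B"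
      unfolding T_def by (intro has_sum_of_real has_sum_infsum sumT that)
    then show ?thesis unfolding Lop_def W_def by (simp add: infsumI)
  qed
  obtain \<mu> where mu: "\<And>z. z \<in> K \<Longrightarrow> Lop B s (\<lambda>w. complex_of_real (v w)) z = \<mu> * complex_of_real (v z)"
    using eig unfolding K_def by blast
  define lam where "lam = Re \<mu>"
  have muT: "complex_of_real (T z) = \<mu> * complex_of_real (v z)" if "z \<in> K" for z
    using LopT[OF that] mu[OF that] by simp
  have mu_real: "\<mu> = complex_of_real lam"
  proof -
    have "Im (complex_of_real (T zmax)) = Im (\<mu> * complex_of_real (v zmax))" using muT[OF zmax(1)] by simp
    then have "Im \<mu> * v zmax = 0" by simp
    then have "Im \<mu> = 0" using vpos'[OF zmax(1)] by simp
    then show ?thesis unfolding lam_def by (simp add: complex_eq_iff)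
  qed
  have Teq: "T z = lam * v z" if "z \<in> K" for z
    using muT[OF that] unfolding mu_real by (metis of_real_eq_iff of_real_mult)
  have lam0: "lam \<ge> 0"
  proof -
    have "T zmax \<ge> 0" unfolding T_def
    proof (intro infsum_nonneg)
      fix b assume b: "b \<in> B"
      show "0 \<le> W zmax b * v (1 / (zmax + b))"
        using Wnn[of zmax b] vpos'[OF theta[OF zmax(1) b]] by simp
    qed
    then show ?thesis using Teq[OF zmax(1)] vpos'[OF zmax(1)] by (simp add: zero_le_mult_iff)
  qed
  define BR where "BR = {b\<in>B. cmod b \<le> R}"
  define BR' where "BR' = {b\<in>B. cmod b > R}"
  have "0 \<notin> B" using Bre[of 0] g1 by auto
  then have finBR: "finite BR" unfolding BR_def
    using finite_BR[OF sumB _ s0] R2 by simp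
  have BRsub: "BR \<subseteq> B" unfolding BR_def by auto
  have Tsplit: "T z = (\<Sum>b\<in>BR. W z b * v (1 / (z + b))) + (\<Sum>\<^sub>\<infinity>b\<in>BR'. W z b * v (1 / (z + b)))"
    if "z \<in> K" for z
  proof -
    have "B = BR \<union> BR'" unfolding BR_def BR'_def by auto
    moreover have "BR \<inter> BR' = {}" unfolding BR_def BR'_def by auto
    moreover have "(\<lambda>b. W z b * v (1 / (z + b))) summable_on BR'"
      by (rule summable_on_subset[OF sumT[OF that]]) (auto simp: BR'_def)
    ultimately show ?thesis unfolding T_def
      using infsum_Un_disjoint[of "\<lambda>b. W z b * v (1 / (z + b))" BR BR'] finBR by simp
  qed
  have tail': "\<eta> * v 0 \<le> (\<Sum>\<^sub>\<infinity>b\<in>BR'. W z b * v (1 / (z + b)))"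
     "(\<Sum>\<^sub>\<infinity>b\<in>BR'. W z b * v (1 / (z + b))) \<le> \<delta> * v 0" if "z \<in> K" for z
  proof -
    have "z \<in> closure H" using that unfolding K_def .
    then show "\<eta> * v 0 \<le> (\<Sum>\<^sub>\<infinity>b\<in>BR'. W z b * v (1 / (z + b)))"
      "(\<Sum>\<^sub>\<infinity>b\<in>BR'. W z b * v (1 / (z + b))) \<le> \<delta> * v 0"
      using tail unfolding BR'_def W_def by auto
  qed
  have Lop_eq: "Lop B s g z = (\<Sum>\<^sub>\<infinity>b\<in>B. complex_of_real (W z b) * g (1 / (z + b)))" for g z
    unfolding Lop_def W_def ..
  have Lop_hom: "Lop B s (\<lambda>w. a * g w) = (\<lambda>w. a * Lop B s g w)" for a g
  proof (rule ext)
    fix w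
    have "Lop B s (\<lambda>w. a * g w) w = (\<Sum>\<^sub>\<infinity>b\<in>B. a * (complex_of_real (W w b) * g (1 / (w + b))))"
      unfolding Lop_eq by (simp add: algebra_simps)
    also have "\<dots> = a * Lop B s g w" unfolding Lop_eq by (rule infsum_cmult_right')
    finally show "Lop B s (\<lambda>w. a * g w) w = a * Lop B s g w" .
  qed
  have Lop_loc: "Lop B s g z = Lop B s h z" if "z \<in> K" "\<And>w. w \<in> K \<Longrightarrow> g w = h w" for g h z
    unfolding Lop_eq by (rule infsum_cong) (simp add: that(2) theta[OF that(1)])
  have LopA: "cmod (Lop B s g z) \<le> C * lam * v z"
    if z: "z \<in> K" and C: "C \<ge> 0" and gC: "\<And>w. w \<in> K \<Longrightarrow> cmod (g w) \<le> C * v w" for g z C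
  proof -
    define t where "t b = complex_of_real (W z b) * g (1 / (z + b))" for b
    have tn: "cmod (t b) \<le> C * (W z b * v (1 / (z + b)))" if b: "b \<in> B" for b
    proof -
      have "cmod (t b) = W z b * cmod (g (1 / (z + b)))" unfolding t_def using Wnn[of z b]
        by (simp add: norm_mult)
      also have "\<dots> \<le> W z b * (C * v (1 / (z + b)))"
        using gC[OF theta[OF z b]] Wnn[of z b] by (rule mult_left_mono)
      finally show ?thesis by (simp add: algebra_simps)
    qed
    have us: "(\<lambda>b. C * (W z b * v (1 / (z + b)))) summable_on B"
      using sumT[OF z] by (rule summable_on_cmult_right)
    have ab: "(\<lambda>b. cmod (t b)) summable_on B" by (rule Infinite_Sum.abs_summable_on_comparison_test'[OF us tn])
    have "cmod (Lop B s g z) = cmod (infsum t B)" unfolding Lop_eq t_def ..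
    also have "\<dots> \<le> (\<Sum>\<^sub>\<infinity>b\<in>B. cmod (t b))" by (rule norm_infsum_bound[OF ab])
    also have "\<dots> \<le> (\<Sum>\<^sub>\<infinity>b\<in>B. C * (W z b * v (1 / (z + b))))" by (rule infsum_mono[OF ab us tn])
    also have "\<dots> = C * T z" unfolding T_def by (rule infsum_cmult_right')
    also have "\<dots> = C * lam * v z" using Teq[OF z] by simp
    finally show ?thesis .
  qed
  have LopK: "\<forall>z\<in>K. cmod ((Lop B s ^^ k) g z) \<le> C * lam ^ k * v z"
    if C: "C \<ge> 0" and gC: "\<forall>w\<in>K. cmod (g w) \<le> C * v w" for k g C
  proof (induction k)
    case 0 then show ?case using gC by simp
  next
    case (Suc k)
    show ?case
    proof
      fix z assume z: "z \<in> K"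
      have "cmod (Lop B s ((Lop B s ^^ k) g) z) \<le> (C * lam ^ k) * lam * v z"
        by (rule LopA[OF z]) (use Suc C lam0 in auto)
      then show "cmod ((Lop B s ^^ Suc k) g z) \<le> C * lam ^ Suc k * v z" by (simp add: algebra_simps)
    qed
  qed
  define D where "D = vmax / vmin"
  have D0: "D > 0" unfolding D_def using vmin0 vmax0 by simp
  have sup1: "cmod (f w) \<le> (1 / vmin) * v w" if "continuous_on K f" "supnorm K f \<le> 1" "w \<in> K" for f w
  proof -
    have "cmod (f w) \<le> 1" using supnorm_ge[OF Kc that(1,3)] that(2) by linarith
    also have "1 \<le> (1 / vmin) * v w" using vbnd(1)[OF that(3)] vmin0 by (simp add: field_simps)
    finally show ?thesis .
  qed
  have powbnd: "C * lam ^ k * v z \<le> lam ^ k * D" if "C = 1 / vmin" "z \<in> K" for C k z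
  proof -
    have "C * lam ^ k * v z \<le> C * lam ^ k * vmax"
      using vbnd(2)[OF that(2)] that(1) vmin0 lam0 by (intro mult_left_mono) auto
    then show ?thesis using that(1) by (simp add: D_def)
  qed
  have Lop_pt: "cmod ((Lop B s ^^ k) f z) \<le> lam ^ k * D"
    if "continuous_on K f" "supnorm K f \<le> 1" "z \<in> K" for k f z
  proof -
    have "cmod ((Lop B s ^^ k) f z) \<le> (1 / vmin) * lam ^ k * v z"
      using LopK[of "1 / vmin" f k] sup1[OF that(1,2)] vmin0 that(3) by auto
    also have "\<dots> \<le> lam ^ k * D" by (rule powbnd[OF refl that(3)])
    finally show ?thesis .
  qed
  define f0 where "f0 = (\<lambda>w. complex_of_real (1 / vmax) * complex_of_real (v w))"
  have f0c: "continuous_on K f0" unfolding f0_def using vc[folded K_def] by (intro continuous_intros)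
  have f0n: "supnorm K f0 \<le> 1"
  proof (rule supnorm_le[OF Kne])
    fix w assume w: "w \<in> K"
    have "cmod (f0 w) = v w / vmax" unfolding f0_def using vpos'[OF w] vmax0 by (simp add: norm_divide)
    also have "\<dots> \<le> 1" using vbnd(2)[OF w] vmax0 by simp
    finally show "cmod (f0 w) \<le> 1" .
  qed
  have f0max: "f0 zmax = 1" unfolding f0_def vmax_def using vmax0 by (simp add: vmax_def)
  have Lop_f0: "Lop B s f0 z = complex_of_real lam * f0 z" if "z \<in> K" for z
  proof -
    have "Lop B s f0 z = complex_of_real (1 / vmax) * Lop B s (\<lambda>w. complex_of_real (v w)) z"
      unfolding f0_def Lop_hom ..
    also have "\<dots> = complex_of_real lam * f0 z" unfolding mu[OF that] mu_real f0_def by simp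
    finally show ?thesis .
  qed
  have Lop_pow_f0: "\<forall>z\<in>K. (Lop B s ^^ k) f0 z = complex_of_real (lam ^ k) * f0 z" for k
  proof (induction k)
    case 0 then show ?case by simp
  next
    case (Suc k)
    show ?case
    proof
      fix z assume z: "z \<in> K"
      have "(Lop B s ^^ Suc k) f0 z = Lop B s ((Lop B s ^^ k) f0) z" by simp
      also have "\<dots> = Lop B s (\<lambda>w. complex_of_real (lam ^ k) * f0 w) z"
        by (rule Lop_loc[OF z]) (use Suc in auto)
      also have "\<dots> = complex_of_real (lam ^ k) * Lop B s f0 z" unfolding Lop_hom ..
      also have "\<dots> = complex_of_real (lam ^ Suc k) * f0 z" using Lop_f0[OF z] by simp
      finally show "(Lop B s ^^ Suc k) f0 z = complex_of_real (lam ^ Suc k) * f0 z" .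
    qed
  qed
  have Lop_up: "opnorm K (Lop B s ^^ k) \<le> lam ^ k * D" for k
    by (rule opnorm_le[OF Kne]) (rule Lop_pt)
  have Lop_low: "lam ^ k \<le> opnorm K (Lop B s ^^ k)" for k
  proof -
    have "cmod ((Lop B s ^^ k) f0 zmax) = lam ^ k" using Lop_pow_f0 zmax(1) f0max lam0 by (simp add: norm_power)
    moreover have "cmod ((Lop B s ^^ k) f0 zmax) \<le> opnorm K (Lop B s ^^ k)"
      by (rule opnorm_ge[OF Kne _ f0c f0n zmax(1)]) (rule Lop_pt)
    ultimately show ?thesis by simp
  qed
  have r_Lop: "spectral_radius K (Lop B s) = lam"
  proof -
    have "(\<lambda>k. opnorm K (Lop B s ^^ k) powr (1 / real k)) \<longlonglongrightarrow> lam"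
    proof (rule tendsto_sandwich[OF _ _ tendsto_const tend_upper[OF D0]])
      show "\<forall>\<^sub>F k in sequentially. lam \<le> opnorm K (Lop B s ^^ k) powr (1 / real k)"
        using eventually_ge_at_top[of 1]
        by eventually_elim (rule root_lower[OF lam0 _ Lop_low])
      show "\<forall>\<^sub>F k in sequentially. opnorm K (Lop B s ^^ k) powr (1 / real k) \<le> lam * D powr (1 / real k)"
        using eventually_ge_at_top[of 1]
      proof eventually_elim
        case (elim k)
        have "0 \<le> lam ^ k" using lam0 by simp
        then show ?case using Lop_low[of k] Lop_up[of k]
          by (intro root_upper[OF lam0 D0 elim]) auto
      qed
    qed
    then show ?thesis unfolding spectral_radius_def by (rule limI)
  qed
  have LopR_eq: "LopR B s R \<alpha> g z = (\<Sum>b\<in>BR. complex_of_real (W z b) * g (1 / (z + b))) + complex_of_real \<alpha> * g 0"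
    for \<alpha> g z unfolding LopR_def W_def BR_def ..
  have BRB: "b \<in> B" if "b \<in> BR" for b using that BRsub by auto
  have goodR: "good_op K (LopR B s R \<alpha>) (real (card BR) + \<alpha>)" if \<alpha>0: "\<alpha> \<ge> 0" for \<alpha>
  proof (rule good_opI)
    fix a :: complex and g :: "complex \<Rightarrow> complex"
    show "LopR B s R \<alpha> (\<lambda>z. a * g z) = (\<lambda>z. a * LopR B s R \<alpha> g z)"
      unfolding LopR_eq by (rule ext) (simp add: sum_distrib_left algebra_simps)
  next
    fix g h :: "complex \<Rightarrow> complex" and z assume gh: "\<And>z. z \<in> K \<Longrightarrow> g z = h z" and z: "z \<in> K"
    have "(\<Sum>b\<in>BR. complex_of_real (W z b) * g (1 / (z + b))) = (\<Sum>b\<in>BR. complex_of_real (W z b) * h (1 / (z + b)))"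
      by (rule sum.cong[OF refl]) (simp add: gh theta[OF z BRB])
    then show "LopR B s R \<alpha> g z = LopR B s R \<alpha> h z" unfolding LopR_eq using gh[OF K0] by simp
  next
    show "0 \<le> real (card BR) + \<alpha>" using \<alpha>0 by simp
  next
    fix g :: "complex \<Rightarrow> complex" and G z assume gG: "\<And>z. z \<in> K \<Longrightarrow> cmod (g z) \<le> G" and z: "z \<in> K"
    have G0: "G \<ge> 0" using gG[OF K0] by (meson norm_ge_zero order_trans)
    have "cmod (LopR B s R \<alpha> g z) \<le> cmod (\<Sum>b\<in>BR. complex_of_real (W z b) * g (1 / (z + b))) + cmod (complex_of_real \<alpha> * g 0)"
      unfolding LopR_eq by (rule norm_triangle_ineq)
    also have "cmod (\<Sum>b\<in>BR. complex_of_real (W z b) * g (1 / (z + b))) \<le> (\<Sum>b\<in>BR. cmod (complex_of_real (W z b) * g (1 / (z + b))))"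
      by (rule norm_sum)
    also have "\<dots> \<le> (\<Sum>b\<in>BR. G)"
    proof (rule sum_mono)
      fix b assume b: "b \<in> BR"
      have "cmod (complex_of_real (W z b) * g (1 / (z + b))) = W z b * cmod (g (1 / (z + b)))"
        using Wnn[of z b] by (simp add: norm_mult)
      also have "\<dots> \<le> 1 * G" using W1[OF z BRB[OF b]] gG[OF theta[OF z BRB[OF b]]] Wnn[of z b] G0
        by (intro mult_mono) auto
      finally show "cmod (complex_of_real (W z b) * g (1 / (z + b))) \<le> G" by simp
    qed
    also have "cmod (complex_of_real \<alpha> * g 0) \<le> \<alpha> * G"
      using gG[OF K0] \<alpha>0 by (simp add: norm_mult mult_left_mono)
    finally show "cmod (LopR B s R \<alpha> g z) \<le> (real (card BR) + \<alpha>) * G" by (simp add: algebra_simps)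
  next
    fix g :: "complex \<Rightarrow> complex" assume gc: "continuous_on K g"
    have cb: "continuous_on K (\<lambda>z. complex_of_real (W z b) * g (1 / (z + b)))" if b: "b \<in> BR" for b
    proof (intro continuous_intros)
      show "continuous_on K (\<lambda>z. W z b)" unfolding W_def
        using zbnz BRB[OF b] by (intro continuous_intros) auto
      show "continuous_on K (\<lambda>z. g (1 / (z + b)))"
      proof (rule continuous_on_compose2[OF gc])
        show "continuous_on K (\<lambda>z. 1 / (z + b))" using zbnz BRB[OF b] by (intro continuous_intros) auto
        show "(\<lambda>z. 1 / (z + b)) ` K \<subseteq> K" using theta BRB[OF b] by auto
      qed
    qed
    show "continuous_on K (LopR B s R \<alpha> g)" unfolding LopR_eq
      by (intro continuous_intros cb) auto
  qed
  have convR: "convergent (\<lambda>k. opnorm K (LopR B s R \<alpha> ^^ k) powr (1 / real k))" if "\<alpha> \<ge> 0" for \<alpha>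
    by (rule sr_convergent[OF goodR[OF that] Kc Kne])
  have LopR_Re: "Re (LopR B s R \<alpha> g z) = (\<Sum>b\<in>BR. W z b * Re (g (1 / (z + b)))) + \<alpha> * Re (g 0)" for \<alpha> g z
    unfolding LopR_eq by (simp add: Re_sum)
  have Lp_low: "\<forall>z\<in>K. lam ^ k / vmax * v z \<le> Re ((LopR B s R \<delta> ^^ k) f0 z)" for k
  proof (induction k)
    case 0 then show ?case unfolding f0_def by simp
  next
    case (Suc k)
    show ?case
    proof
      fix z assume z: "z \<in> K"
      define c where "c = lam ^ k / vmax"
      have c0: "c \<ge> 0" unfolding c_def using lam0 vmax0 by simp
      have "Re ((LopR B s R \<delta> ^^ Suc k) f0 z) = (\<Sum>b\<in>BR. W z b * Re ((LopR B s R \<delta> ^^ k) f0 (1 / (z + b)))) + \<delta> * Re ((LopR B s R \<delta> ^^ k) f0 0)"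
        by (simp add: LopR_Re)
      also have "\<dots> \<ge> (\<Sum>b\<in>BR. W z b * (c * v (1 / (z + b)))) + \<delta> * (c * v 0)"
        using Suc[unfolded c_def[symmetric]] K0 theta[OF z] BRB Wnn \<delta>0
        by (intro add_mono sum_mono mult_left_mono) auto
      moreover have "(\<Sum>b\<in>BR. W z b * (c * v (1 / (z + b)))) + \<delta> * (c * v 0)
          = c * ((\<Sum>b\<in>BR. W z b * v (1 / (z + b))) + \<delta> * v 0)"
        by (simp add: sum_distrib_left algebra_simps)
      moreover have "c * ((\<Sum>b\<in>BR. W z b * v (1 / (z + b))) + \<delta> * v 0) \<ge> c * T z"
        using Tsplit[OF z] tail'(2)[OF z] c0 by (intro mult_left_mono) auto
      moreover have "c * T z = lam ^ Suc k / vmax * v z" unfolding c_def Teq[OF z] by simp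
      ultimately show "lam ^ Suc k / vmax * v z \<le> Re ((LopR B s R \<delta> ^^ Suc k) f0 z)" by linarith
    qed
  qed
  have Lp_lowop: "lam ^ k \<le> opnorm K (LopR B s R \<delta> ^^ k)" for k
  proof -
    have "lam ^ k = lam ^ k / vmax * v zmax" using vmax0 by (simp add: vmax_def)
    also have "\<dots> \<le> Re ((LopR B s R \<delta> ^^ k) f0 zmax)" using Lp_low zmax(1) by blast
    also have "\<dots> \<le> cmod ((LopR B s R \<delta> ^^ k) f0 zmax)" by (rule complex_Re_le_cmod)
    also have "\<dots> \<le> opnorm K (LopR B s R \<delta> ^^ k)"
      by (rule opnorm_ge_good[OF good_pow[OF goodR] Kc Kne f0c f0n zmax(1)]) (use \<delta>0 in simp)
    finally show ?thesis .
  qed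
  have LmA: "cmod (LopR B s R \<eta> g z) \<le> C * lam * v z"
    if z: "z \<in> K" and C: "C \<ge> 0" and gC: "\<And>w. w \<in> K \<Longrightarrow> cmod (g w) \<le> C * v w" for g z C
  proof -
    have "cmod (LopR B s R \<eta> g z) \<le> cmod (\<Sum>b\<in>BR. complex_of_real (W z b) * g (1 / (z + b))) + cmod (complex_of_real \<eta> * g 0)"
      unfolding LopR_eq by (rule norm_triangle_ineq)
    also have "cmod (\<Sum>b\<in>BR. complex_of_real (W z b) * g (1 / (z + b))) \<le> (\<Sum>b\<in>BR. cmod (complex_of_real (W z b) * g (1 / (z + b))))"
      by (rule norm_sum)
    also have "\<dots> \<le> (\<Sum>b\<in>BR. C * (W z b * v (1 / (z + b))))"
    proof (rule sum_mono)
      fix b assume b: "b \<in> BR"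
      have "cmod (complex_of_real (W z b) * g (1 / (z + b))) = W z b * cmod (g (1 / (z + b)))"
        using Wnn[of z b] by (simp add: norm_mult)
      also have "\<dots> \<le> W z b * (C * v (1 / (z + b)))"
        using gC[OF theta[OF z BRB[OF b]]] Wnn[of z b] by (rule mult_left_mono)
      finally show "cmod (complex_of_real (W z b) * g (1 / (z + b))) \<le> C * (W z b * v (1 / (z + b)))"
        by (simp add: algebra_simps)
    qed
    also have "cmod (complex_of_real \<eta> * g 0) \<le> \<eta> * (C * v 0)"
      using gC[OF K0] \<eta>0 by (simp add: norm_mult mult_left_mono)
    also have "(\<Sum>b\<in>BR. C * (W z b * v (1 / (z + b)))) + \<eta> * (C * v 0)
        = C * ((\<Sum>b\<in>BR. W z b * v (1 / (z + b))) + \<eta> * v 0)"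
      by (simp add: sum_distrib_left algebra_simps)
    also have "\<dots> \<le> C * T z"
      using Tsplit[OF z] tail'(1)[OF z] C by (intro mult_left_mono) auto
    also have "\<dots> = C * lam * v z" using Teq[OF z] by simp
    finally show ?thesis by simp
  qed
  have LmK: "\<forall>z\<in>K. cmod ((LopR B s R \<eta> ^^ k) g z) \<le> C * lam ^ k * v z"
    if C: "C \<ge> 0" and gC: "\<forall>w\<in>K. cmod (g w) \<le> C * v w" for k g C
  proof (induction k)
    case 0 then show ?case using gC by simp
  next
    case (Suc k)
    show ?case
    proof
      fix z assume z: "z \<in> K"
      have "cmod (LopR B s R \<eta> ((LopR B s R \<eta> ^^ k) g) z) \<le> (C * lam ^ k) * lam * v z"
        by (rule LmA[OF z]) (use Suc C lam0 in auto)
      then show "cmod ((LopR B s R \<eta> ^^ Suc k) g z) \<le> C * lam ^ Suc k * v z" by (simp add: algebra_simps)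
    qed
  qed
  have Lm_up: "opnorm K (LopR B s R \<eta> ^^ k) \<le> lam ^ k * D" for k
  proof (rule opnorm_le[OF Kne])
    fix f z assume f: "continuous_on K f" "supnorm K f \<le> 1" and z: "z \<in> K"
    have "cmod ((LopR B s R \<eta> ^^ k) f z) \<le> (1 / vmin) * lam ^ k * v z"
      using LmK[of "1 / vmin" f k] sup1[OF f] vmin0 z by auto
    also have "\<dots> \<le> lam ^ k * D" by (rule powbnd[OF refl z])
    finally show "cmod ((LopR B s R \<eta> ^^ k) f z) \<le> lam ^ k * D" .
  qed
  have Lm_nn: "opnorm K (LopR B s R \<eta> ^^ k) \<ge> 0" for k
    by (rule opnorm_nonneg[OF good_pow[OF goodR[OF \<eta>0]] Kc Kne])
  have r_m: "spectral_radius K (LopR B s R \<eta>) \<le> lam"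
  proof -
    have lim: "(\<lambda>k. opnorm K (LopR B s R \<eta> ^^ k) powr (1 / real k)) \<longlonglongrightarrow> spectral_radius K (LopR B s R \<eta>)"
      unfolding spectral_radius_def using convR[OF \<eta>0] by (simp add: convergent_LIMSEQ_iff)
    show ?thesis
    proof (rule LIMSEQ_le[OF lim tend_upper[OF D0]])
      show "\<exists>N. \<forall>k\<ge>N. opnorm K (LopR B s R \<eta> ^^ k) powr (1 / real k) \<le> lam * D powr (1 / real k)"
      proof (intro exI allI impI)
        fix k :: nat assume "k \<ge> 1"
        then show "opnorm K (LopR B s R \<eta> ^^ k) powr (1 / real k) \<le> lam * D powr (1 / real k)"
          by (rule root_upper[OF lam0 D0 _ Lm_nn Lm_up])
      qed
    qed
  qed
  have r_p: "lam \<le> spectral_radius K (LopR B s R \<delta>)"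
  proof -
    have lim: "(\<lambda>k. opnorm K (LopR B s R \<delta> ^^ k) powr (1 / real k)) \<longlonglongrightarrow> spectral_radius K (LopR B s R \<delta>)"
      unfolding spectral_radius_def using convR[of \<delta>] \<delta>0 by (simp add: convergent_LIMSEQ_iff)
    show ?thesis
    proof (rule LIMSEQ_le[OF tendsto_const lim])
      show "\<exists>N. \<forall>k\<ge>N. lam \<le> opnorm K (LopR B s R \<delta> ^^ k) powr (1 / real k)"
      proof (intro exI allI impI)
        fix k :: nat assume "k \<ge> 1"
        then show "lam \<le> opnorm K (LopR B s R \<delta> ^^ k) powr (1 / real k)"
          by (rule root_lower[OF lam0 _ Lp_lowop])
      qed
    qed
  qed
  show ?thesis using r_m r_p r_Lop unfolding K_def by simp
qed
end
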